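(* Let $\Omega\subset\mathbb{R}^d$ be open, $E$ a non-trivial locally convex Hausdorff space over $\mathbb{K}$ and $\mathcal{FV}(\Omega)$ a dom-space such that $\mathcal{FV}(\Omega)\subset\mathcal{C}^1(\Omega)$ as a linear subspace. If $\delta\in\mathcal{C}^1(\Omega,\mathcal{FV}(\Omega)'_\kappa)$, where $\delta(x):=\delta_x$, then for all $u\in\mathcal{FV}(\Omega)\varepsilon E$ we have $S(u)\in\mathcal{C}^1(\Omega,E)$ and $(\partial^{e_n})^E S(u)(x)=u(\delta_x\circ(\partial^{e_n})^{\mathbb{K}})$ for all $x\in\Omega$ and $1\le n\le d$.
   Context: $\mathbb{K}\in\{\mathbb{R},\mathbb{C}\}$. For a locally convex space $Z$ and $f\colon\Omega\to Z$, $(\partial^{e_n})^Z f(x):=\lim_{h\to0,\,h\in\mathbb{R}\setminus\{0\}}\frac{f(x+he_n)-f(x)}{h}$ ($e_n$ the $n$-th unit vector); $f\in\mathcal{C}^1(\Omega,Z)$ if these limits exist for all $x$, $n$ and each $(\partial^{e_n})^Z f$ is continuous; $\mathcal{C}^1(\Omega):=\mathcal{C}^1(\Omega,\mathbb{K})$. Framework: $J,M$ non-empty index sets, $(\omega_m)_{m\in M}$ non-empty sets, $\nu_{j,m}\colon\omega_m\to[0,\infty)$ such that for all $m$, $x\in\omega_m$ some $\nu_{j,m}(x)>0$; $\operatorname{AP}(\Omega)\subset\mathbb{K}^\Omega$ a linear subspace; $T_m\colon\operatorname{dom}T_m\to\mathbb{K}^{\omega_m}$ linear maps on linear subspaces of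 $\mathbb{K}^\Omega$; $\mathcal{FV}(\Omega):=\{f\in\operatorname{AP}(\Omega)\cap\bigcap_m\operatorname{dom}T_m: |f|_{j,m}:=\sup_{x\in\omega_m}|T_m(f)(x)|\nu_{j,m}(x)<\infty\ \forall j,m\}$ with these seminorms. It is a dom-space if it is Hausdorff, the seminorms are directed and every $\delta_x\colon f\mapsto f(x)$ belongs to $\mathcal{FV}(\Omega)'$. $\mathcal{FV}(\Omega)'_\kappa$: dual with the topology of uniform convergence on absolutely convex compact subsets of $\mathcal{FV}(\Omega)$. $\mathcal{FV}(\Omega)\varepsilon E$: continuous linear maps $\mathcal{FV}(\Omega)'_\kappa\to E$ with the topology of uniform convergence on equicontinuous sets; $S(u)(x):=u(\delta_x)$. $\delta_x\circ(\partial^{e_n})^{\mathbb{K}}$ is the functional $f\mapsto(\partial^{e_n})^{\mathbb{K}}f(x)$ on $\mathcal{FV}(\Omega)$. *)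

theory Defs
  imports "HOL-Analysis.Analysis" "HOL-Library.Function_Algebras"
begin

text \<open>A locally convex space is represented by a carrier V (a linear subspace of an
  abelian group type, with a scalar multiplication sm) and a set P of seminorms on V.\<close>

definition lc_topology :: "'v::ab_group_add set \<Rightarrow> ('v \<Rightarrow> real) set \<Rightarrow> 'v topology" where
  "lc_topology V P = topology (\<lambda>U. U \<subseteq> V \<and>
     (\<forall>x\<in>U. \<exists>F \<epsilon>. finite F \<and> F \<subseteq> P \<and> \<epsilon> > 0 \<and>
        {y\<in>V. \<forall>p\<in>F. p (y - x) < \<epsilon>} \<subseteq> U))"

definition subspace_on :: "('k::real_normed_field \<Rightarrow> 'v::ab_group_add \<Rightarrow> 'v) \<Rightarrow> 'v set \<Rightarrow> bool" where
  "subspace_on sm V \<longleftrightarrow> 0 \<in> V \<and> (\<forall>x\<in>V. \<forall>y\<in>V. x + y \<in> V) \<and> (\<forall>c. \<forall>x\<in>V. sm c x \<in> V)"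

definition seminorm_on :: "('k::real_normed_field \<Rightarrow> 'v::ab_group_add \<Rightarrow> 'v) \<Rightarrow> 'v set \<Rightarrow> ('v \<Rightarrow> real) \<Rightarrow> bool" where
  "seminorm_on sm V p \<longleftrightarrow> (\<forall>x\<in>V. 0 \<le> p x) \<and> (\<forall>x\<in>V. \<forall>y\<in>V. p (x + y) \<le> p x + p y)
     \<and> (\<forall>c. \<forall>x\<in>V. p (sm c x) = norm c * p x)"

definition lchs :: "('k::real_normed_field \<Rightarrow> 'v::ab_group_add \<Rightarrow> 'v) \<Rightarrow> 'v set \<Rightarrow> ('v \<Rightarrow> real) set \<Rightarrow> bool" where
  "lchs sm V P \<longleftrightarrow> subspace_on sm V \<and> (\<forall>p\<in>P. seminorm_on sm V p)
     \<and> (\<forall>x\<in>V. (\<forall>p\<in>P. p x = 0) \<longrightarrow> x = 0)"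

definition linear_on :: "('k \<Rightarrow> 'v::ab_group_add \<Rightarrow> 'v) \<Rightarrow> ('k \<Rightarrow> 'w::ab_group_add \<Rightarrow> 'w)
    \<Rightarrow> 'v set \<Rightarrow> ('v \<Rightarrow> 'w) \<Rightarrow> bool" where
  "linear_on sm1 sm2 V f \<longleftrightarrow> (\<forall>x\<in>V. \<forall>y\<in>V. f (x + y) = f x + f y) \<and> (\<forall>c. \<forall>x\<in>V. f (sm1 c x) = sm2 c (f x))"

definition fsm :: "'k::real_normed_field \<Rightarrow> ('a \<Rightarrow> 'k) \<Rightarrow> ('a \<Rightarrow> 'k)" where
  "fsm c f = (\<lambda>x. c * f x)"

definition has_pderiv_in :: "'z::ab_group_add topology \<Rightarrow> ('k::real_normed_field \<Rightarrow> 'z \<Rightarrow> 'z)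
    \<Rightarrow> (real^'n \<Rightarrow> 'z) \<Rightarrow> 'n \<Rightarrow> real^'n \<Rightarrow> 'z \<Rightarrow> bool" where
  "has_pderiv_in Z sm f n x L \<longleftrightarrow>
     limitin Z (\<lambda>h::real. sm (of_real (inverse h)) (f (x + h *\<^sub>R axis n 1) - f x)) L (at 0)"

definition pderiv_in :: "'z::ab_group_add topology \<Rightarrow> ('k::real_normed_field \<Rightarrow> 'z \<Rightarrow> 'z)
    \<Rightarrow> (real^'n \<Rightarrow> 'z) \<Rightarrow> 'n \<Rightarrow> real^'n \<Rightarrow> 'z" where
  "pderiv_in Z sm f n x = (THE L. has_pderiv_in Z sm f n x L)"

definition C1_on :: "(real^'n) set \<Rightarrow> 'z::ab_group_add topology \<Rightarrow> ('k::real_normed_field \<Rightarrow> 'z \<Rightarrow> 'z)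
    \<Rightarrow> (real^'n \<Rightarrow> 'z) \<Rightarrow> bool" where
  "C1_on \<Omega> Z sm f \<longleftrightarrow> f ` \<Omega> \<subseteq> topspace Z \<and>
     (\<forall>n. (\<forall>x\<in>\<Omega>. \<exists>L. has_pderiv_in Z sm f n x L) \<and>
          continuous_map (top_of_set \<Omega>) Z (\<lambda>x. pderiv_in Z sm f n x))"

text \<open>Functions \<open>\<Omega> \<rightarrow> \<bbbK>\<close> are represented by functions on \<open>\<real>^d\<close> vanishing outside \<open>\<Omega>\<close>.\<close>
definition fun_on :: "'a set \<Rightarrow> ('a \<Rightarrow> 'k::zero) set" where
  "fun_on \<Omega> = {f. \<forall>x. x \<notin> \<Omega> \<longrightarrow> f x = 0}"

definition fv_framework ::
  "'a set \<Rightarrow> ('a \<Rightarrow> 'k::real_normed_field) set \<Rightarrow> ('m \<Rightarrow> ('a \<Rightarrow> 'k) set)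
   \<Rightarrow> ('m \<Rightarrow> ('a \<Rightarrow> 'k) \<Rightarrow> 'w \<Rightarrow> 'k) \<Rightarrow> ('m \<Rightarrow> 'w set) \<Rightarrow> ('j \<Rightarrow> 'm \<Rightarrow> 'w \<Rightarrow> real) \<Rightarrow> bool" where
  "fv_framework \<Omega> AP domT T \<omega> \<nu> \<longleftrightarrow>
     (\<forall>m. \<omega> m \<noteq> {}) \<and> (\<forall>j m x. 0 \<le> \<nu> j m x) \<and> (\<forall>m. \<forall>x\<in>\<omega> m. \<exists>j. 0 < \<nu> j m x) \<and>
     AP \<subseteq> fun_on \<Omega> \<and> subspace_on fsm AP \<and>
     (\<forall>m. domT m \<subseteq> fun_on \<Omega> \<and> subspace_on fsm (domT m) \<and> linear_on fsm fsm (domT m) (T m))"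

definition fv_sn :: "('m \<Rightarrow> ('a \<Rightarrow> 'k::real_normed_field) \<Rightarrow> 'w \<Rightarrow> 'k) \<Rightarrow> ('m \<Rightarrow> 'w set)
    \<Rightarrow> ('j \<Rightarrow> 'm \<Rightarrow> 'w \<Rightarrow> real) \<Rightarrow> 'j \<Rightarrow> 'm \<Rightarrow> ('a \<Rightarrow> 'k) \<Rightarrow> real" where
  "fv_sn T \<omega> \<nu> j m f = (SUP x\<in>\<omega> m. norm (T m f x) * \<nu> j m x)"

definition FV ::
  "('a \<Rightarrow> 'k::real_normed_field) set \<Rightarrow> ('m \<Rightarrow> ('a \<Rightarrow> 'k) set)
   \<Rightarrow> ('m \<Rightarrow> ('a \<Rightarrow> 'k) \<Rightarrow> 'w \<Rightarrow> 'k) \<Rightarrow> ('m \<Rightarrow> 'w set) \<Rightarrow> ('j \<Rightarrow> 'm \<Rightarrow> 'w \<Rightarrow> real) \<Rightarrow> ('a \<Rightarrow> 'k) set" where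
  "FV AP domT T \<omega> \<nu> = {f \<in> AP. (\<forall>m. f \<in> domT m) \<and>
      (\<forall>j m. bdd_above ((\<lambda>x. norm (T m f x) * \<nu> j m x) ` \<omega> m))}"

definition FV_seminorms :: "('m \<Rightarrow> ('a \<Rightarrow> 'k::real_normed_field) \<Rightarrow> 'w \<Rightarrow> 'k) \<Rightarrow> ('m \<Rightarrow> 'w set)
    \<Rightarrow> ('j \<Rightarrow> 'm \<Rightarrow> 'w \<Rightarrow> real) \<Rightarrow> (('a \<Rightarrow> 'k) \<Rightarrow> real) set" where
  "FV_seminorms T \<omega> \<nu> = {fv_sn T \<omega> \<nu> j m | j m. True}"

text \<open>Continuous linear functionals on (V, P); represented as functions vanishing outside V.\<close>
definition dual :: "('a \<Rightarrow> 'k::real_normed_field) set \<Rightarrow> (('a \<Rightarrow> 'k) \<Rightarrow> real) set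
    \<Rightarrow> (('a \<Rightarrow> 'k) \<Rightarrow> 'k) set" where
  "dual V P = {\<phi>. linear_on fsm (*) V \<phi> \<and> continuous_map (lc_topology V P) euclidean \<phi>
                  \<and> (\<forall>f. f \<notin> V \<longrightarrow> \<phi> f = 0)}"

definition abs_convex :: "('k::real_normed_field \<Rightarrow> 'v::ab_group_add \<Rightarrow> 'v) \<Rightarrow> 'v set \<Rightarrow> bool" where
  "abs_convex sm K \<longleftrightarrow> K \<noteq> {} \<and>
     (\<forall>x\<in>K. \<forall>y\<in>K. \<forall>a b. norm a + norm b \<le> 1 \<longrightarrow> sm a x + sm b y \<in> K)"

definition kappa_seminorms :: "('a \<Rightarrow> 'k::real_normed_field) set \<Rightarrow> (('a \<Rightarrow> 'k) \<Rightarrow> real) set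
    \<Rightarrow> ((('a \<Rightarrow> 'k) \<Rightarrow> 'k) \<Rightarrow> real) set" where
  "kappa_seminorms V P = {(\<lambda>\<phi>. SUP f\<in>K. norm (\<phi> f)) | K.
       K \<subseteq> V \<and> abs_convex fsm K \<and> compactin (lc_topology V P) K}"

definition delta :: "('a \<Rightarrow> 'k::real_normed_field) set \<Rightarrow> 'a \<Rightarrow> ('a \<Rightarrow> 'k) \<Rightarrow> 'k" where
  "delta V x = (\<lambda>f. if f \<in> V then f x else 0)"

definition dom_space ::
  "'a set \<Rightarrow> ('a \<Rightarrow> 'k::real_normed_field) set \<Rightarrow> ('m \<Rightarrow> ('a \<Rightarrow> 'k) set)
   \<Rightarrow> ('m \<Rightarrow> ('a \<Rightarrow> 'k) \<Rightarrow> 'w \<Rightarrow> 'k) \<Rightarrow> ('m \<Rightarrow> 'w set) \<Rightarrow> ('j \<Rightarrow> 'm \<Rightarrow> 'w \<Rightarrow> real) \<Rightarrow> bool" where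
  "dom_space \<Omega> AP domT T \<omega> \<nu> \<longleftrightarrow>
     (let V = FV AP domT T \<omega> \<nu> in
       (\<forall>f\<in>V. (\<forall>j m. fv_sn T \<omega> \<nu> j m f = 0) \<longrightarrow> f = 0) \<and>
       (\<forall>j1 m1 j2 m2. \<exists>j3 m3 C. 0 < C \<and> (\<forall>f\<in>V.
           max (fv_sn T \<omega> \<nu> j1 m1 f) (fv_sn T \<omega> \<nu> j2 m2 f) \<le> C * fv_sn T \<omega> \<nu> j3 m3 f)) \<and>
       (\<forall>x\<in>\<Omega>. delta V x \<in> dual V (FV_seminorms T \<omega> \<nu>)))"

definition eps_product :: "('a \<Rightarrow> 'k::real_normed_field) set \<Rightarrow> (('a \<Rightarrow> 'k) \<Rightarrow> real) set
    \<Rightarrow> ('k \<Rightarrow> 'e::ab_group_add \<Rightarrow> 'e) \<Rightarrow> ('e \<Rightarrow> real) set \<Rightarrow> ((('a \<Rightarrow> 'k) \<Rightarrow> 'k) \<Rightarrow> 'e) set" where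
  "eps_product V P smE PE = {u. linear_on fsm smE (dual V P) u \<and>
      continuous_map (lc_topology (dual V P) (kappa_seminorms V P)) (lc_topology UNIV PE) u}"

end

theory Submission
  imports Defs
begin


datatype 'a cx = CX (cre: 'a) (cim: 'a)

instantiation cx :: (comm_ring_1) comm_ring_1
begin
definition "0 = CX 0 0"
definition "1 = CX 1 0"
definition "x + y = CX (cre x + cre y) (cim x + cim y)"
definition "x - y = CX (cre x - cre y) (cim x - cim y)"
definition "- x = CX (- cre x) (- cim x)"
definition "x * y = CX (cre x * cre y - cim x * cim y) (cre x * cim y + cim x * cre y)"
instance
  by standard (auto simp: zero_cx_def one_cx_def plus_cx_def minus_cx_def uminus_cx_def
      times_cx_def cx.expand algebra_simps)
end

lemma cx_simps [simp]:
  "cre (x + y) = cre x + cre y" "cim (x + y) = cim x + cim y"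
  "cre (x - y) = cre x - cre y" "cim (x - y) = cim x - cim y"
  "cre (x * y) = cre x * cre y - cim x * cim y" "cim (x * y) = cre x * cim y + cim x * cre y"
  "cre (- x) = - cre x" "cim (- x) = - cim x"
  "cre 0 = 0" "cim 0 = 0" "cre 1 = 1" "cim 1 = 0"
  by (simp_all add: zero_cx_def one_cx_def plus_cx_def minus_cx_def uminus_cx_def times_cx_def)

definition phi :: "complex \<Rightarrow> 'k::real_normed_field cx" where
  "phi w = CX (of_real (Re w)) (of_real (Im w))"

definition iota :: "'k::real_normed_field \<Rightarrow> 'k cx" where
  "iota k = CX k 0"

definition NN :: "'k::real_normed_field cx \<Rightarrow> real" where
  "NN z = norm (cre z * cre z + cim z * cim z)"

lemma phi_mult: "phi (w * z) = (phi w * phi z :: 'k::real_normed_field cx)"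
  by (rule cx.expand) (simp add: phi_def of_real_mult of_real_diff of_real_add)
lemma phi_diff: "phi (w - z) = (phi w - phi z :: 'k::real_normed_field cx)"
  by (rule cx.expand) (simp add: phi_def of_real_diff)
lemma phi_add: "phi (w + z) = (phi w + phi z :: 'k::real_normed_field cx)"
  by (rule cx.expand) (simp add: phi_def of_real_add)
lemma phi_minus: "phi (- w) = (- phi w :: 'k::real_normed_field cx)"
  by (rule cx.expand) (simp add: phi_def)
lemma phi_one: "phi 1 = (1 :: 'k::real_normed_field cx)"
  by (rule cx.expand) (simp add: phi_def)
lemma phi_power: "phi (w ^ n) = (phi w ^ n :: 'k::real_normed_field cx)"
  by (induction n) (simp_all add: phi_one phi_mult)
lemma iota_mult: "iota (a * b) = iota a * iota b"
  by (rule cx.expand) (simp add: iota_def)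
lemma iota_diff: "iota (a - b) = iota a - iota b"
  by (rule cx.expand) (simp add: iota_def)
lemma iota_add: "iota (a + b) = iota a + iota b"
  by (rule cx.expand) (simp add: iota_def)
lemma iota_one: "iota 1 = 1"
  by (rule cx.expand) (simp add: iota_def)
lemma iota_power: "iota (a ^ n) = iota a ^ n"
  by (induction n) (simp_all add: iota_one iota_mult)
lemma iota_of_real: "iota (of_real r) = (phi (of_real r) :: 'k::real_normed_field cx)"
  by (rule cx.expand) (simp add: iota_def phi_def)

lemma NN_mult: "NN (z * w) = NN z * NN w"
proof -
  have "(cre z * cre w - cim z * cim w) * (cre z * cre w - cim z * cim w) +
        (cre z * cim w + cim z * cre w) * (cre z * cim w + cim z * cre w)
      = (cre z * cre z + cim z * cim z) * (cre w * cre w + cim w * cim w)"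
    by (simp add: algebra_simps)
  then show ?thesis by (simp add: NN_def norm_mult)
qed

lemma NN_prod_list: "NN (prod_list (map g ws)) = prod_list (map (\<lambda>w. NN (g w)) ws)"
proof (induction ws)
  case Nil then show ?case by (simp add: NN_def)
next
  case (Cons a ws) then show ?case by (simp only: list.map prod_list.Cons NN_mult)
qed

lemma NN_iota: "NN (iota k) = norm k ^ 2"
  by (simp add: NN_def iota_def norm_mult power2_eq_square)

lemma factor_pow2:
  "\<exists>ws. length ws = 2^k - 1 \<and> (\<forall>Y::'k::real_normed_field cx.
      Y ^ (2^k) - phi c ^ (2^k) = (Y - phi c) * prod_list (map (\<lambda>w. Y - phi w) ws))"
proof (induction k arbitrary: c)
  case 0
  then show ?case by (intro exI[of _ "[]"]) simp
next
  case (Suc k)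
  define om where "om = cis (pi / 2^k)"
  have om: "om ^ (2^k) = -1"
  proof -
    have "real (2^k) * (pi / 2^k) = pi" by simp
    moreover have "om ^ (2^k) = cis (real (2^k) * (pi / 2^k))" unfolding om_def by (rule Complex.DeMoivre)
    ultimately show ?thesis by simp
  qed
  define d where "d = c * om"
  have d: "(phi d :: 'k cx) ^ (2^k) = - (phi c ^ (2^k))"
  proof -
    have "d ^ (2^k) = - (c ^ (2^k))" unfolding d_def power_mult_distrib om by simp
    then have "phi (d ^ (2^k)) = (phi (- (c ^ (2^k))) :: 'k cx)" by simp
    then show ?thesis by (simp add: phi_power phi_minus)
  qed
  obtain ws1 where ws1: "length ws1 = 2^k - 1" "\<forall>Y::'k cx.
      Y ^ (2^k) - phi c ^ (2^k) = (Y - phi c) * prod_list (map (\<lambda>w. Y - phi w) ws1)"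
    using Suc.IH by blast
  obtain ws2 where ws2: "length ws2 = 2^k - 1" "\<forall>Y::'k cx.
      Y ^ (2^k) - phi d ^ (2^k) = (Y - phi d) * prod_list (map (\<lambda>w. Y - phi w) ws2)"
    using Suc.IH by blast
  show ?case
  proof (intro exI[of _ "ws1 @ d # ws2"] conjI allI)
    show "length (ws1 @ d # ws2) = 2 ^ Suc k - 1"
      using ws1 ws2 by simp
    fix Y :: "'k cx"
    have "Y ^ (2 ^ Suc k) - phi c ^ (2 ^ Suc k) = (Y ^ (2^k) - phi c ^ (2^k)) * (Y ^ (2^k) - phi d ^ (2^k))"
      by (simp add: d power_mult[symmetric] power2_eq_square algebra_simps)
         (simp add: power_add[symmetric] mult_2)
    also have "\<dots> = (Y - phi c) * prod_list (map (\<lambda>w. Y - phi w) (ws1 @ d # ws2))"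
      unfolding ws1(2)[rule_format] ws2(2)[rule_format] by (simp add: mult_ac)
    finally show "Y ^ (2 ^ Suc k) - phi c ^ (2 ^ Suc k) = (Y - phi c) * prod_list (map (\<lambda>w. Y - phi w) (ws1 @ d # ws2))" .
  qed
qed


definition qf :: "'k::real_normed_field \<Rightarrow> complex \<Rightarrow> real" where
  "qf x w = norm ((x - of_real (Re w))^2 + of_real ((Im w)^2))"

lemma NN_qf: "NN (iota x - phi w) = qf x w"
  by (simp add: NN_def iota_def phi_def qf_def power2_eq_square of_real_mult)

lemma qf_ge0: "0 \<le> qf x w" by (simp add: qf_def)

lemma prod_list_lower:
  fixes h :: "'a \<Rightarrow> real"
  assumes "\<forall>w\<in>set ws. b \<le> h w" "0 \<le> b"
  shows "b ^ length ws \<le> prod_list (map h ws)"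
  using assms
proof (induction ws)
  case Nil then show ?case by simp
next
  case (Cons a ws)
  then show ?case by (simp add: mult_mono order_trans[OF \<open>0 \<le> b\<close>])
qed

lemma factor_quad:
  fixes x :: "'k::real_normed_field"
  assumes "s^2 = w - complex_of_real (c^2)"
  shows "iota ((x - of_real a)^2 + of_real (c^2)) - phi w
       = (iota x - phi (of_real a + s)) * (iota x - phi (of_real a - s))"
proof -
  have "phi w = phi (s^2 + complex_of_real (c^2))" using assms by simp
  then have pw: "(phi w :: 'k cx) = phi s ^ 2 + phi (of_real (c^2))"
    by (simp add: phi_add phi_power)
  have "iota ((x - of_real a)^2 + of_real (c^2)) = (iota x - phi (of_real a))^2 + phi (of_real (c^2))"
    by (simp add: iota_add iota_power iota_diff iota_of_real phi_power)
  then show ?thesis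
    by (simp add: pw phi_add phi_diff power2_eq_square algebra_simps)
qed

lemma NN_factor:
  fixes x :: "'k::real_normed_field"
  assumes "s^2 = w - complex_of_real (c^2)"
  shows "NN (iota ((x - of_real a)^2 + of_real (c^2)) - phi w)
       = qf x (of_real a + s) * qf x (of_real a - s)"
  by (simp only: factor_quad[OF assms] NN_mult NN_qf)

lemma step_ineq:
  fixes x :: "'k::real_normed_field"
  assumes min: "\<forall>w. qf x z \<le> qf x w" and mpos: "0 < qf x z"
  shows "qf x (Complex (Re z) (sqrt ((Im z)^2 + qf x z / 2))) \<le> qf x z"
proof -
  define m where "m = qf x z"
  define a where "a = Re z"
  define c where "c = Im z"
  define e where "e = m / 2"
  define z1 where "z1 = Complex a (sqrt (c^2 + e))"
  define g where "g = (x - of_real a)^2 + of_real (c^2)"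
  have m0: "0 < m" "0 < e" using mpos by (auto simp: m_def e_def)
  have gm: "norm g = m" by (simp add: g_def m_def qf_def a_def c_def)
  have key: "qf x z1 * m ^ (2^k - 1) \<le> m ^ (2^k) + e ^ (2^k)" for k
  proof -
    define n where "n = (2::nat)^k"
    have n1: "n = Suc (n - 1)" by (simp add: n_def)
    obtain ws where ws: "length ws = n - 1" "\<forall>Y::'k cx.
      Y ^ n - phi (complex_of_real (-e)) ^ n = (Y - phi (complex_of_real (-e))) * prod_list (map (\<lambda>w. Y - phi w) ws)"
      using factor_pow2[of k "complex_of_real (-e)"] unfolding n_def by blast
    have lhs: "iota g ^ n - phi (complex_of_real (-e)) ^ n = (iota (g ^ n - of_real ((-e) ^ n)) :: 'k cx)"
      by (simp add: iota_diff iota_power iota_of_real[symmetric] of_real_power del: of_real_minus)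
    have "NN (iota (g ^ n - of_real ((-e) ^ n))) = norm (g ^ n - of_real ((-e) ^ n)) ^ 2"
      by (rule NN_iota)
    also have "\<dots> \<le> (m ^ n + e ^ n) ^ 2"
    proof -
      have "norm (g ^ n - of_real ((-e) ^ n)) \<le> norm (g ^ n) + norm (of_real ((-e) ^ n) :: 'k)"
        by (rule norm_triangle_ineq4)
      also have "\<dots> = m ^ n + e ^ n" using m0 by (simp add: norm_power gm power_abs)
      finally show ?thesis by (intro power_mono) auto
    qed
    finally have up: "NN (iota g ^ n - phi (complex_of_real (-e)) ^ n :: 'k cx) \<le> (m ^ n + e ^ n) ^ 2"
      using lhs by simp
    have fac: "NN (iota g - phi w :: 'k cx) \<ge> m * m" for w
    proof -
      have "(csqrt (w - complex_of_real (c^2)))^2 = w - complex_of_real (c^2)" by simp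
      from NN_factor[OF this, of x a] have "NN (iota g - phi w :: 'k cx) = qf x (of_real a + csqrt (w - complex_of_real (c^2))) * qf x (of_real a - csqrt (w - complex_of_real (c^2)))"
        by (simp add: g_def)
      also have "\<dots> \<ge> m * m" using min m0 unfolding m_def by (intro mult_mono) (auto simp: qf_ge0)
      finally show ?thesis .
    qed
    have first: "NN (iota g - phi (complex_of_real (-e)) :: 'k cx) = qf x z1 * qf x z1"
    proof -
      define s where "s = \<i> * complex_of_real (sqrt (c^2 + e))"
      have "s^2 = complex_of_real (-e) - complex_of_real (c^2)"
        using m0 by (simp add: s_def power_mult_distrib of_real_power[symmetric] del: of_real_power)
      from NN_factor[OF this, of x a] have "NN (iota g - phi (complex_of_real (-e)) :: 'k cx) = qf x (of_real a + s) * qf x (of_real a - s)"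
        by (simp add: g_def)
      moreover have "qf x (of_real a + s) = qf x z1" by (simp add: qf_def s_def z1_def)
      moreover have "qf x (of_real a - s) = qf x z1" by (simp add: qf_def s_def z1_def)
      ultimately show ?thesis by simp
    qed
    have "NN (iota g ^ n - phi (complex_of_real (-e)) ^ n :: 'k cx)
        = NN (iota g - phi (complex_of_real (-e)) :: 'k cx) * prod_list (map (\<lambda>w. NN (iota g - phi w :: 'k cx)) ws)"
      by (simp only: ws(2)[rule_format] NN_mult NN_prod_list)
    also have "\<dots> \<ge> (qf x z1 * qf x z1) * (m * m) ^ (n - 1)"
      unfolding first using fac m0 ws(1) prod_list_lower[of ws "m * m" "\<lambda>w. NN (iota g - phi w :: 'k cx)"]
      by (intro mult_left_mono) (auto simp: qf_ge0)
    finally have A: "(qf x z1 * qf x z1) * (m * m) ^ (n - 1) \<le> (m ^ n + e ^ n) ^ 2"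
      using up by linarith
    have "(qf x z1 * m ^ (n - 1))^2 = (qf x z1 * qf x z1) * (m * m) ^ (n - 1)"
      by (simp add: power_mult_distrib power2_eq_square mult_ac)
    with A have "(qf x z1 * m ^ (n - 1))^2 \<le> (m ^ n + e ^ n) ^ 2" by simp
    moreover have "0 \<le> m ^ n + e ^ n" using m0 by simp
    ultimately have "qf x z1 * m ^ (n - 1) \<le> m ^ n + e ^ n"
      by (rule power2_le_imp_le)
    then show ?thesis by (simp only: n_def)
  qed
  have "qf x z1 \<le> m"
  proof (rule ccontr)
    assume "\<not> ?thesis"
    then have d: "0 < (qf x z1 - m) / e" using m0 by simp
    obtain k where k: "(1/2::real) ^ k < (qf x z1 - m) / e"
      using real_arch_pow_inv[OF d, of "1/2"] by auto
    define N where "N = (2::nat)^k - 1"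
    have kN: "k \<le> N" unfolding N_def using less_exp[of k] by linarith
    have "(1/2::real) ^ N \<le> (1/2) ^ k" by (rule power_decreasing[OF kN]) auto
    have "qf x z1 * m ^ N \<le> m ^ Suc N + e ^ Suc N"
      using key[of k] by (simp add: N_def)
    also have "\<dots> = m ^ N * (m + e * (1/2)^N)"
      using m0 by (simp add: e_def power_divide field_simps)
    finally have "qf x z1 \<le> m + e * (1/2)^N"
      using m0 by (simp add: mult_le_cancel_left_pos)
    also have "\<dots> \<le> m + e * (1/2)^k"
      using m0 \<open>(1/2::real) ^ N \<le> (1/2) ^ k\<close> by simp
    also have "\<dots> < m + (qf x z1 - m)"
      using k m0 by (simp add: field_simps)
    finally show False by simp
  qed
  then show ?thesis by (simp add: z1_def m_def a_def c_def e_def)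
qed


lemma qf_lower: "qf x (Complex a t) \<ge> t^2 - norm ((x - of_real a)^2)"
proof -
  have "norm (of_real (t^2) :: 'a) \<le> norm ((x - of_real a)^2 + of_real (t^2)) + norm ((x - of_real a)^2)"
    by (metis add_diff_cancel_left' norm_triangle_ineq4 add.commute)
  then show ?thesis by (simp add: qf_def norm_power power2_abs)
qed

lemma qf_big:
  fixes x :: "'k::real_normed_field"
  assumes "cmod w > 3 * norm x + 1"
  shows "qf x w \<ge> norm x ^ 2"
proof -
  define r where "r = cmod w"
  define a where "a = Re w"
  define nx where "nx = norm x"
  have ar: "\<bar>a\<bar> \<le> r" by (simp add: a_def r_def abs_Re_le_cmod)
  have rr: "r^2 = (Re w)^2 + (Im w)^2" by (simp add: r_def cmod_power2)
  have E: "(x - of_real (Re w))^2 + of_real ((Im w)^2) = of_real (r^2) - (of_real (2*a) * x - x^2)"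
    unfolding rr by (simp add: a_def power2_eq_square algebra_simps)
  have "norm (of_real (2*a) * x - x^2) \<le> 2 * \<bar>a\<bar> * nx + nx^2"
    using norm_triangle_ineq4[of "of_real (2*a) * x" "x^2"] by (simp add: norm_mult norm_power nx_def)
  also have "\<dots> \<le> 2 * r * nx + nx^2" using ar by (simp add: mult_right_mono nx_def)
  finally have n1: "norm (of_real (2*a) * x - x^2) \<le> 2 * r * nx + nx^2" .
  have "r^2 \<le> norm ((x - of_real (Re w))^2 + of_real ((Im w)^2)) + norm (of_real (2*a) * x - x^2)"
    unfolding E using norm_triangle_ineq4[of "(of_real (r^2)::'k)" "of_real (2*a) * x - x^2"]
      norm_triangle_ineq2[of "(of_real (r^2)::'k)" "of_real (2*a) * x - x^2"] by (simp add: norm_power power2_abs)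
  then have q: "qf x w \<ge> r^2 - 2 * r * nx - nx^2" using n1 by (simp add: qf_def)
  have nx0: "0 \<le> nx" by (simp add: nx_def)
  have r: "r > 3 * nx + 1" using assms by (simp add: r_def nx_def)
  have "r * (r - 2 * nx) \<ge> (3 * nx + 1) * (nx + 1)"
    using r nx0 by (intro mult_mono) auto
  moreover have "0 \<le> nx * nx" using nx0 by simp
  moreover have "r * (r - 2 * nx) = r * r - 2 * r * nx" by (simp add: algebra_simps)
  moreover have "(3 * nx + 1) * (nx + 1) = 3 * (nx * nx) + 4 * nx + 1" by (simp add: algebra_simps)
  ultimately have "r * r - 2 * r * nx - nx * nx \<ge> nx * nx" using nx0 by linarith
  then have "r^2 - 2 * r * nx - nx^2 \<ge> nx^2" by (simp add: power2_eq_square)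
  with q show ?thesis by (simp add: nx_def)
qed

lemma quad_root:
  fixes x :: "'k::real_normed_field"
  shows "\<exists>a b::real. (x - of_real a)^2 + of_real (b^2) = 0"
proof -
  define R where "R = 3 * norm x + 1"
  have cont: "continuous_on (cball 0 R) (qf x)"
    unfolding qf_def by (intro continuous_intros)
  obtain z0 where z0: "z0 \<in> cball 0 R" "\<forall>y\<in>cball 0 R. qf x z0 \<le> qf x y"
  proof -
    have "0 \<le> R" using norm_ge_zero[of x] unfolding R_def by linarith
    then have "cball 0 R \<noteq> {}" by simp
    then show ?thesis using continuous_attains_inf[OF compact_cball _ cont] that by blast
  qed
  have glob: "qf x z0 \<le> qf x w" for w
  proof (cases "w \<in> cball 0 R")
    case True then show ?thesis using z0 by auto
  next
    case False
    then have "cmod w > 3 * norm x + 1" by (simp add: R_def)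
    then have "qf x w \<ge> norm x ^ 2" by (rule qf_big)
    moreover have "qf x 0 = norm x ^ 2" by (simp add: qf_def norm_power)
    moreover have "qf x z0 \<le> qf x 0" using z0 by (simp add: R_def)
    ultimately show ?thesis by simp
  qed
  define m where "m = qf x z0"
  define a where "a = Re z0"
  define c where "c = Im z0"
  define t where "t j = sqrt (c^2 + real j * (m / 2))" for j :: nat
  have "m \<le> 0"
  proof (rule ccontr)
    assume "\<not> m \<le> 0"
    then have m0: "0 < m" by simp
    have it: "qf x (Complex a (t j)) = m" for j
    proof (induction j)
      case 0
      have "qf x (Complex a (t 0)) = qf x z0" by (simp add: t_def qf_def a_def c_def)
      then show ?case by (simp add: m_def)
    next
      case (Suc j)
      have mn: "\<forall>w. qf x (Complex a (t j)) \<le> qf x w" using Suc glob by (simp add: m_def)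
      have "qf x (Complex (Re (Complex a (t j))) (sqrt ((Im (Complex a (t j)))^2 + qf x (Complex a (t j)) / 2))) \<le> qf x (Complex a (t j))"
        by (rule step_ineq[OF mn]) (use Suc m0 in simp)
      moreover have "sqrt ((t j)^2 + m / 2) = t (Suc j)"
        using m0 by (simp add: t_def algebra_simps)
      ultimately have "qf x (Complex a (t (Suc j))) \<le> m" using Suc by simp
      then show ?case using glob[of "Complex a (t (Suc j))"] by (simp add: m_def)
    qed
    define K where "K = norm ((x - of_real a)^2 :: 'k)"
    obtain j :: nat where j: "m + K < real j * (m / 2)"
      using reals_Archimedean3[of "m/2"] m0 by (meson half_gt_zero)
    have "(t j)^2 = c^2 + real j * (m / 2)" using m0 by (simp add: t_def)
    then have "m \<ge> c^2 + real j * (m / 2) - K"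
      using qf_lower[where x=x and a=a and t="t j"] it[of j] by (simp add: K_def)
    moreover have "0 \<le> c^2" by simp
    ultimately show False using j by linarith
  qed
  then have "m = 0" using qf_ge0[of x z0] by (simp add: m_def)
  then have "(x - of_real a)^2 + of_real (c^2) = 0" by (simp add: m_def qf_def a_def c_def)
  then show ?thesis by blast
qed


lemma compact_unit_ball_rnf: "compact (cball (0::'k::real_normed_field) 1)"
proof (cases "\<forall>y::'k. \<exists>r. y = of_real r")
  case True
  have "cball (0::'k) 1 = of_real ` {-1..1}"
  proof
    show "cball (0::'k) 1 \<subseteq> of_real ` {-1..1}"
    proof
      fix y :: 'k assume y: "y \<in> cball 0 1"
      obtain r where r: "y = of_real r" using True by blast
      then have "\<bar>r\<bar> \<le> 1" using y by simp
      then have "r \<in> {-1..1}" by (simp add: abs_le_iff)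
      then show "y \<in> of_real ` {-1..1}" using r by blast
    qed
    show "of_real ` {-1..1} \<subseteq> cball (0::'k) 1" by auto
  qed
  moreover have "compact ((of_real :: real \<Rightarrow> 'k) ` {-1..1})"
    by (intro compact_continuous_image continuous_intros) auto
  ultimately show ?thesis by simp
next
  case False
  then obtain y0 :: 'k where y0: "\<forall>r. y0 \<noteq> of_real r" by blast
  obtain a b where ab: "(y0 - of_real a)^2 + of_real (b^2) = 0" using quad_root by blast
  have b0: "b \<noteq> 0"
  proof
    assume "b = 0"
    then have "(y0 - of_real a)^2 = 0" using ab by simp
    then have "y0 = of_real a" by simp
    then show False using y0 by blast
  qed
  define j where "j = (y0 - of_real a) / of_real b"
  have jj: "j * j = -1"
  proof -
    have "(y0 - of_real a) * (y0 - of_real a) = - (of_real b * of_real b)" using ab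
      by (simp add: power2_eq_square of_real_mult eq_neg_iff_add_eq_0)
    then show ?thesis using b0 by (simp add: j_def field_simps)
  qed
  have nj: "norm j = 1"
  proof -
    have "norm j * norm j = 1" using jj by (metis norm_minus_cancel norm_mult norm_one)
    then show ?thesis by (metis abs_norm_cancel abs_square_eq_1 power2_eq_square)
  qed
  have rep: "\<exists>\<alpha> \<beta>. y = of_real \<alpha> + of_real \<beta> * j" for y :: 'k
  proof -
    obtain a' b' where ab': "(y - of_real a')^2 + of_real (b'^2) = 0" using quad_root by blast
    show ?thesis
    proof (cases "b' = 0")
      case True
      then have "y = of_real a'" using ab' by simp
      then show ?thesis by (intro exI[of _ a'] exI[of _ 0]) simp
    next
      case False
      define q where "q = (y - of_real a') / of_real b'"
      have "(y - of_real a') * (y - of_real a') = - (of_real b' * of_real b')" using ab'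
        by (simp add: power2_eq_square of_real_mult eq_neg_iff_add_eq_0)
      then have "q * q = -1" using False by (simp add: q_def field_simps)
      then have "(q - j) * (q + j) = 0" using jj by (simp add: algebra_simps)
      then have "q = j \<or> q = - j" by (simp add: eq_neg_iff_add_eq_0)
      moreover have "y = of_real a' + of_real b' * q" using False by (simp add: q_def)
      ultimately show ?thesis by (metis mult_minus_right of_real_minus mult_minus_left)
    qed
  qed
  define psi where "psi = (\<lambda>p::real \<times> real. (of_real (fst p) + of_real (snd p) * j :: 'k))"
  have cpt: "compact (psi ` ({-2..2} \<times> {-2..2}))"
    unfolding psi_def by (intro compact_continuous_image continuous_intros compact_Times compact_Icc)
  have sub: "cball (0::'k) 1 \<subseteq> psi ` ({-2..2} \<times> {-2..2})"
  proof
    fix y :: 'k assume y: "y \<in> cball 0 1"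
    obtain \<alpha> \<beta> where yr: "y = of_real \<alpha> + of_real \<beta> * j" using rep by blast
    have prod: "(of_real \<alpha> + of_real \<beta> * j) * (of_real \<alpha> - of_real \<beta> * j) = (of_real (\<alpha>^2 + \<beta>^2) :: 'k)"
    proof -
      have "(of_real \<alpha> + of_real \<beta> * j) * (of_real \<alpha> - of_real \<beta> * j)
          = (of_real \<alpha> * of_real \<alpha> - of_real \<beta> * of_real \<beta> * (j * j) :: 'k)"
        by (simp add: algebra_simps)
      also have "\<dots> = of_real (\<alpha>^2 + \<beta>^2)" unfolding jj by (simp add: power2_eq_square of_real_mult)
      finally show ?thesis .
    qed
    have n2: "norm (of_real \<alpha> - of_real \<beta> * j :: 'k) \<le> \<bar>\<alpha>\<bar> + \<bar>\<beta>\<bar>"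
      using norm_triangle_ineq4[of "of_real \<alpha> :: 'k" "of_real \<beta> * j"] by (simp add: norm_mult nj)
    have e1: "norm y * norm (of_real \<alpha> - of_real \<beta> * j :: 'k) = norm (of_real (\<alpha>^2 + \<beta>^2) :: 'k)"
      by (metis norm_mult prod yr)
    have e2: "norm (of_real (\<alpha>^2 + \<beta>^2) :: 'k) = \<alpha>^2 + \<beta>^2"
      by (simp only: norm_of_real) simp
    have "\<alpha>^2 + \<beta>^2 = norm y * norm (of_real \<alpha> - of_real \<beta> * j :: 'k)"
      using e1 e2 by simp
    also have "\<dots> \<le> 1 * (\<bar>\<alpha>\<bar> + \<bar>\<beta>\<bar>)"
      using y n2 by (intro mult_mono) auto
    finally have h: "\<alpha>^2 + \<beta>^2 \<le> \<bar>\<alpha>\<bar> + \<bar>\<beta>\<bar>" by simp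
    have "\<bar>\<alpha>\<bar> \<le> 2 \<and> \<bar>\<beta>\<bar> \<le> 2"
    proof (rule ccontr)
      assume "\<not> ?thesis"
      then have "\<bar>\<alpha>\<bar> > 2 \<or> \<bar>\<beta>\<bar> > 2" by auto
      moreover have "\<alpha>^2 = \<bar>\<alpha>\<bar> * \<bar>\<alpha>\<bar>" "\<beta>^2 = \<bar>\<beta>\<bar> * \<bar>\<beta>\<bar>" by (simp_all add: power2_eq_square)
      moreover have "\<bar>\<alpha>\<bar> * \<bar>\<alpha>\<bar> \<ge> \<bar>\<alpha>\<bar> - 1/4" "\<bar>\<beta>\<bar> * \<bar>\<beta>\<bar> \<ge> \<bar>\<beta>\<bar> - 1/4"
      proof -
        have "0 \<le> (\<bar>\<alpha>\<bar> - 1/2) * (\<bar>\<alpha>\<bar> - 1/2)" "0 \<le> (\<bar>\<beta>\<bar> - 1/2) * (\<bar>\<beta>\<bar> - 1/2)" by simp_all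
        then show "\<bar>\<alpha>\<bar> * \<bar>\<alpha>\<bar> \<ge> \<bar>\<alpha>\<bar> - 1/4" "\<bar>\<beta>\<bar> * \<bar>\<beta>\<bar> \<ge> \<bar>\<beta>\<bar> - 1/4"
          by (simp_all add: algebra_simps)
      qed
      moreover have "\<bar>\<alpha>\<bar> > 2 \<Longrightarrow> \<bar>\<alpha>\<bar> * \<bar>\<alpha>\<bar> \<ge> 2 * \<bar>\<alpha>\<bar>"
        using mult_right_mono[of 2 "\<bar>\<alpha>\<bar>" "\<bar>\<alpha>\<bar>"] by (simp only: less_imp_le abs_ge_zero)
      moreover have "\<bar>\<beta>\<bar> > 2 \<Longrightarrow> \<bar>\<beta>\<bar> * \<bar>\<beta>\<bar> \<ge> 2 * \<bar>\<beta>\<bar>"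
        using mult_right_mono[of 2 "\<bar>\<beta>\<bar>" "\<bar>\<beta>\<bar>"] by (simp only: less_imp_le abs_ge_zero)
      ultimately show False using h by linarith
    qed
    then show "y \<in> psi ` ({-2..2} \<times> {-2..2})"
    proof -
      assume ab2: "\<bar>\<alpha>\<bar> \<le> 2 \<and> \<bar>\<beta>\<bar> \<le> 2"
      have "(\<alpha>, \<beta>) \<in> {-2..2} \<times> {-2..2}" using ab2 by (simp add: abs_le_iff)
      moreover have "y = psi (\<alpha>, \<beta>)" using yr by (simp add: psi_def)
      ultimately show ?thesis by blast
    qed
  qed
  have "cball (0::'k) 1 = psi ` ({-2..2} \<times> {-2..2}) \<inter> cball 0 1" using sub by blast
  then show ?thesis using compact_Int_closed[OF cpt closed_cball, of 0 1] by metis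
qed



lemma istop_lc:
  fixes P :: "('a::ab_group_add \<Rightarrow> real) set"
  shows "istopology (\<lambda>U. U \<subseteq> V \<and>
     (\<forall>x\<in>U. \<exists>F \<epsilon>. finite F \<and> F \<subseteq> P \<and> \<epsilon> > 0 \<and>
        {y\<in>V. \<forall>p\<in>F. p (y - x) < \<epsilon>} \<subseteq> U))"
  unfolding istopology_def
proof (rule conjI; intro allI impI)
  fix S T
  assume S: "S \<subseteq> V \<and> (\<forall>x\<in>S. \<exists>F \<epsilon>. finite F \<and> F \<subseteq> P \<and> \<epsilon> > 0 \<and> {y\<in>V. \<forall>p\<in>F. p (y - x) < \<epsilon>} \<subseteq> S)"
     and T: "T \<subseteq> V \<and> (\<forall>x\<in>T. \<exists>F \<epsilon>. finite F \<and> F \<subseteq> P \<and> \<epsilon> > 0 \<and> {y\<in>V. \<forall>p\<in>F. p (y - x) < \<epsilon>} \<subseteq> T)"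
  show "S \<inter> T \<subseteq> V \<and> (\<forall>x\<in>S \<inter> T. \<exists>F \<epsilon>. finite F \<and> F \<subseteq> P \<and> \<epsilon> > 0 \<and> {y\<in>V. \<forall>p\<in>F. p (y - x) < \<epsilon>} \<subseteq> S \<inter> T)"
  proof (intro conjI ballI)
    show "S \<inter> T \<subseteq> V" using S by blast
    fix x assume x: "x \<in> S \<inter> T"
    obtain F1 e1 where 1: "finite F1" "F1 \<subseteq> P" "e1 > 0" "{y\<in>V. \<forall>p\<in>F1. p (y - x) < e1} \<subseteq> S"
      using bspec[OF conjunct2[OF S], of x] x by blast
    obtain F2 e2 where 2: "finite F2" "F2 \<subseteq> P" "e2 > 0" "{y\<in>V. \<forall>p\<in>F2. p (y - x) < e2} \<subseteq> T"
      using bspec[OF conjunct2[OF T], of x] x by blast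
    show "\<exists>F \<epsilon>. finite F \<and> F \<subseteq> P \<and> \<epsilon> > 0 \<and> {y\<in>V. \<forall>p\<in>F. p (y - x) < \<epsilon>} \<subseteq> S \<inter> T"
    proof (intro exI[of _ "F1 \<union> F2"] exI[of _ "min e1 e2"] conjI)
      show "finite (F1 \<union> F2)" "F1 \<union> F2 \<subseteq> P" "0 < min e1 e2" using 1 2 by auto
      show "{y\<in>V. \<forall>p\<in>F1 \<union> F2. p (y - x) < min e1 e2} \<subseteq> S \<inter> T"
      proof
        fix y assume y: "y \<in> {y\<in>V. \<forall>p\<in>F1 \<union> F2. p (y - x) < min e1 e2}"
        then have "y \<in> {y\<in>V. \<forall>p\<in>F1. p (y - x) < e1}" "y \<in> {y\<in>V. \<forall>p\<in>F2. p (y - x) < e2}" by auto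
        then show "y \<in> S \<inter> T" using 1(4) 2(4) by blast
      qed
    qed
  qed
next
  fix K
  assume K: "\<forall>U\<in>K. U \<subseteq> V \<and> (\<forall>x\<in>U. \<exists>F \<epsilon>. finite F \<and> F \<subseteq> P \<and> \<epsilon> > 0 \<and> {y\<in>V. \<forall>p\<in>F. p (y - x) < \<epsilon>} \<subseteq> U)"
  show "\<Union>K \<subseteq> V \<and> (\<forall>x\<in>\<Union>K. \<exists>F \<epsilon>. finite F \<and> F \<subseteq> P \<and> \<epsilon> > 0 \<and> {y\<in>V. \<forall>p\<in>F. p (y - x) < \<epsilon>} \<subseteq> \<Union>K)"
  proof (intro conjI ballI)
    show "\<Union>K \<subseteq> V" using K by blast
    fix x assume "x \<in> \<Union>K"
    then obtain U where U: "U \<in> K" "x \<in> U" by blast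
    have KU: "U \<subseteq> V \<and> (\<forall>x\<in>U. \<exists>F \<epsilon>. finite F \<and> F \<subseteq> P \<and> \<epsilon> > 0 \<and> {y\<in>V. \<forall>p\<in>F. p (y - x) < \<epsilon>} \<subseteq> U)"
      using bspec[OF K U(1)] .
    obtain F e where "finite F" "F \<subseteq> P" "e > 0" "{y\<in>V. \<forall>p\<in>F. p (y - x) < e} \<subseteq> U"
      using bspec[OF conjunct2[OF KU] U(2)] by blast
    then show "\<exists>F \<epsilon>. finite F \<and> F \<subseteq> P \<and> \<epsilon> > 0 \<and> {y\<in>V. \<forall>p\<in>F. p (y - x) < \<epsilon>} \<subseteq> \<Union>K"
      using U by blast
  qed
qed

lemma openin_lc:
  fixes P :: "('a::ab_group_add \<Rightarrow> real) set"
  shows "openin (lc_topology V P) U \<longleftrightarrow> U \<subseteq> V \<and>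
     (\<forall>x\<in>U. \<exists>F \<epsilon>. finite F \<and> F \<subseteq> P \<and> \<epsilon> > 0 \<and>
        {y\<in>V. \<forall>p\<in>F. p (y - x) < \<epsilon>} \<subseteq> U)"
  unfolding lc_topology_def using istop_lc[of V P] by simp

lemma topspace_lc [simp]:
  fixes P :: "('a::ab_group_add \<Rightarrow> real) set"
  shows "topspace (lc_topology V P) = V"
proof
  show "topspace (lc_topology V P) \<subseteq> V" unfolding topspace_def openin_lc by blast
  have "\<forall>x\<in>V. \<exists>F \<epsilon>. finite F \<and> F \<subseteq> P \<and> \<epsilon> > 0 \<and> {y\<in>V. \<forall>p\<in>F. p (y - x) < \<epsilon>} \<subseteq> V"
    by (intro ballI exI[of _ "{}"] exI[of _ "1::real"]) auto
  then have "openin (lc_topology V P) V" unfolding openin_lc by blast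
  then show "V \<subseteq> topspace (lc_topology V P)" by (rule openin_subset)
qed

lemma limitin_lc_bound:
  fixes h :: "'a::ab_group_add \<Rightarrow> 'b::real_normed_vector"
  assumes lim: "limitin (lc_topology V P) Q L F" and q: "q \<in> P"
    and hq: "\<forall>y\<in>V. \<forall>z\<in>V. norm (h y - h z) \<le> q (y - z)"
  shows "((\<lambda>t. h (Q t)) \<longlongrightarrow> h L) F"
proof (rule tendstoI)
  fix e :: real assume e: "0 < e"
  have LV: "L \<in> V" using lim unfolding limitin_def by simp
  define U where "U = {y \<in> V. norm (h y - h L) < e}"
  have "openin (lc_topology V P) U"
    unfolding openin_lc
  proof (intro conjI ballI)
    show "U \<subseteq> V" by (auto simp: U_def)
    fix y0 assume y0: "y0 \<in> U"
    define d where "d = e - norm (h y0 - h L)"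
    have d: "0 < d" using y0 by (simp add: U_def d_def)
    have "{y\<in>V. \<forall>p\<in>{q}. p (y - y0) < d} \<subseteq> U"
    proof
      fix y assume y: "y \<in> {y\<in>V. \<forall>p\<in>{q}. p (y - y0) < d}"
      have "norm (h y - h L) \<le> norm (h y - h y0) + norm (h y0 - h L)"
        using norm_triangle_ineq[of "h y - h y0" "h y0 - h L"] by simp
      also have "\<dots> \<le> q (y - y0) + norm (h y0 - h L)"
        using hq y y0 by (simp add: U_def)
      also have "\<dots> < e" using y by (simp add: d_def)
      finally show "y \<in> U" using y by (simp add: U_def)
    qed
    then show "\<exists>F \<epsilon>. finite F \<and> F \<subseteq> P \<and> \<epsilon> > 0 \<and> {y\<in>V. \<forall>p\<in>F. p (y - y0) < \<epsilon>} \<subseteq> U"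
      using q d by (intro exI[of _ "{q}"] exI[of _ d]) auto
  qed
  moreover have "L \<in> U" using LV e by (simp add: U_def)
  ultimately have "eventually (\<lambda>t. Q t \<in> U) F" using lim unfolding limitin_def by blast
  then show "eventually (\<lambda>t. dist (h (Q t)) (h L) < e) F"
    by (rule eventually_mono) (simp add: U_def dist_norm)
qed


lemma fsm_fsm: "fsm a (fsm b f) = fsm (a * b) f"
  by (simp add: fsm_def fun_eq_iff mult.assoc)

lemma fsm_diff: "fsm c f - fsm c0 f = fsm (c - c0) f"
  by (simp add: fsm_def fun_eq_iff left_diff_distrib)

lemma fsm_one: "fsm 1 f = f"
  by (simp add: fsm_def)

context
  fixes \<Omega> :: "'a set" and AP :: "('a \<Rightarrow> 'k::real_normed_field) set"
    and domT :: "'m \<Rightarrow> ('a \<Rightarrow> 'k) set" and T :: "'m \<Rightarrow> ('a \<Rightarrow> 'k) \<Rightarrow> 'w \<Rightarrow> 'k"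
    and \<omega> :: "'m \<Rightarrow> 'w set" and \<nu> :: "'j \<Rightarrow> 'm \<Rightarrow> 'w \<Rightarrow> real"
  assumes FW: "fv_framework \<Omega> AP domT T \<omega> \<nu>"
begin

lemma T_fsm: "f \<in> domT m \<Longrightarrow> T m (fsm c f) = (\<lambda>w. c * T m f w)"
  using FW unfolding fv_framework_def linear_on_def fsm_def by blast

lemma FV_fsm: assumes "f \<in> FV AP domT T \<omega> \<nu>" shows "fsm c f \<in> FV AP domT T \<omega> \<nu>"
proof -
  have AP: "fsm c f \<in> AP" using FW assms unfolding fv_framework_def subspace_on_def FV_def by blast
  have D: "fsm c f \<in> domT m" for m using FW assms unfolding fv_framework_def subspace_on_def FV_def by blast
  have B: "bdd_above ((\<lambda>x. norm (T m (fsm c f) x) * \<nu> j m x) ` \<omega> m)" for j m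
  proof -
    obtain B where B: "\<forall>x\<in>\<omega> m. norm (T m f x) * \<nu> j m x \<le> B"
      using assms unfolding FV_def bdd_above_def by fastforce
    have "\<forall>x\<in>\<omega> m. norm (T m (fsm c f) x) * \<nu> j m x \<le> norm c * B"
    proof
      fix x assume x: "x \<in> \<omega> m"
      have "norm (T m (fsm c f) x) * \<nu> j m x = norm c * (norm (T m f x) * \<nu> j m x)"
        using assms T_fsm[of f m c] unfolding FV_def by (simp add: norm_mult)
      also have "\<dots> \<le> norm c * B" using B x by (simp add: mult_left_mono)
      finally show "norm (T m (fsm c f) x) * \<nu> j m x \<le> norm c * B" .
    qed
    then show ?thesis by (auto intro: bdd_aboveI2)
  qed
  show ?thesis unfolding FV_def using AP D B by simp
qed

lemma FV_bdd: "f \<in> FV AP domT T \<omega> \<nu> \<Longrightarrow> bdd_above ((\<lambda>x. norm (T m f x) * \<nu> j m x) ` \<omega> m)"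
  by (simp add: FV_def)

lemma fv_sn_nonneg: assumes "f \<in> FV AP domT T \<omega> \<nu>" shows "0 \<le> fv_sn T \<omega> \<nu> j m f"
proof -
  obtain w where w: "w \<in> \<omega> m" using FW unfolding fv_framework_def by blast
  have "0 \<le> norm (T m f w) * \<nu> j m w" using FW unfolding fv_framework_def by simp
  also have "\<dots> \<le> fv_sn T \<omega> \<nu> j m f" unfolding fv_sn_def
    by (rule cSUP_upper[OF w FV_bdd[OF assms]])
  finally show ?thesis .
qed

lemma fv_sn_fsm: assumes "f \<in> FV AP domT T \<omega> \<nu>"
  shows "fv_sn T \<omega> \<nu> j m (fsm c f) \<le> norm c * fv_sn T \<omega> \<nu> j m f"
  unfolding fv_sn_def
proof (rule cSUP_least)
  show "\<omega> m \<noteq> {}" using FW unfolding fv_framework_def by blast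
  fix x assume x: "x \<in> \<omega> m"
  have "norm (T m (fsm c f) x) * \<nu> j m x = norm c * (norm (T m f x) * \<nu> j m x)"
    using assms T_fsm[of f m c] unfolding FV_def by (simp add: norm_mult)
  also have "\<dots> \<le> norm c * (SUP x\<in>\<omega> m. norm (T m f x) * \<nu> j m x)"
    by (intro mult_left_mono cSUP_upper[OF x FV_bdd[OF assms]]) simp
  finally show "norm (T m (fsm c f) x) * \<nu> j m x \<le> norm c * (SUP x\<in>\<omega> m. norm (T m f x) * \<nu> j m x)" .
qed

lemma cont_line:
  assumes f: "f \<in> FV AP domT T \<omega> \<nu>"
  shows "continuous_map euclidean (lc_topology (FV AP domT T \<omega> \<nu>) (FV_seminorms T \<omega> \<nu>)) (\<lambda>c. fsm c f)"
  unfolding continuous_map_def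
proof (intro conjI allI impI)
  show "(\<lambda>c. fsm c f) \<in> topspace euclidean \<rightarrow> topspace (lc_topology (FV AP domT T \<omega> \<nu>) (FV_seminorms T \<omega> \<nu>))"
    using FV_fsm[OF f] by simp
  fix U assume U: "openin (lc_topology (FV AP domT T \<omega> \<nu>) (FV_seminorms T \<omega> \<nu>)) U"
  have "open {c. fsm c f \<in> U}"
    unfolding open_dist
  proof (intro ballI)
    fix c0 assume c0: "c0 \<in> {c. fsm c f \<in> U}"
    obtain F e where F: "finite F" "F \<subseteq> FV_seminorms T \<omega> \<nu>" "e > 0"
      "{y\<in>FV AP domT T \<omega> \<nu>. \<forall>p\<in>F. p (y - fsm c0 f) < e} \<subseteq> U"
      using U c0 unfolding openin_lc by blast
    define M where "M = (\<Sum>p\<in>F. p f) + 1"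
    have pnn: "\<forall>p\<in>F. 0 \<le> p f"
      using F(2) fv_sn_nonneg[OF f] unfolding FV_seminorms_def by blast
    have pM: "\<forall>p\<in>F. p f \<le> M - 1"
    proof
      fix p assume "p \<in> F"
      then show "p f \<le> M - 1" unfolding M_def using member_le_sum[of p F "\<lambda>p. p f"] pnn F(1) by simp
    qed
    have M0: "0 < M" unfolding M_def using sum_nonneg[of F "\<lambda>p. p f"] pnn by fastforce
    show "\<exists>d>0. \<forall>y. dist y c0 < d \<longrightarrow> y \<in> {c. fsm c f \<in> U}"
    proof (intro exI[of _ "e / M"] conjI allI impI)
      show "0 < e / M" using F(3) M0 by simp
      fix c assume c: "dist c c0 < e / M"
      have "\<forall>p\<in>F. p (fsm c f - fsm c0 f) < e"
      proof
        fix p assume p: "p \<in> F"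
        then obtain j m where pj: "p = fv_sn T \<omega> \<nu> j m" using F(2) unfolding FV_seminorms_def by blast
        have "p (fsm c f - fsm c0 f) \<le> norm (c - c0) * p f"
          unfolding fsm_diff pj by (rule fv_sn_fsm[OF f])
        also have "\<dots> \<le> norm (c - c0) * M" using pM p by (intro mult_left_mono) auto
        also have "\<dots> < e / M * M" using c M0 by (intro mult_strict_right_mono) (auto simp: dist_norm)
        also have "\<dots> = e" using M0 by simp
        finally show "p (fsm c f - fsm c0 f) < e" .
      qed
      then show "c \<in> {c. fsm c f \<in> U}" using F(4) FV_fsm[OF f] by blast
    qed
  qed
  then show "openin euclidean {x \<in> topspace euclidean. fsm x f \<in> U}" by simp
qed

definition disk :: "('a \<Rightarrow> 'k) \<Rightarrow> ('a \<Rightarrow> 'k) set" where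
  "disk f = (\<lambda>c. fsm c f) ` cball 0 1"

lemma disk_kappa:
  assumes f: "f \<in> FV AP domT T \<omega> \<nu>"
  shows "(\<lambda>\<phi>. SUP g\<in>disk f. norm (\<phi> g)) \<in> kappa_seminorms (FV AP domT T \<omega> \<nu>) (FV_seminorms T \<omega> \<nu>)"
proof -
  have sub: "disk f \<subseteq> FV AP domT T \<omega> \<nu>" unfolding disk_def using FV_fsm[OF f] by blast
  have ac: "abs_convex fsm (disk f)"
    unfolding abs_convex_def
  proof (intro conjI ballI allI impI)
    show "disk f \<noteq> {}" unfolding disk_def by simp
    fix x y and a b :: 'k assume x: "x \<in> disk f" and y: "y \<in> disk f" and ab: "norm a + norm b \<le> (1::real)"
    obtain c1 c2 where c: "x = fsm c1 f" "y = fsm c2 f" "norm c1 \<le> 1" "norm c2 \<le> 1"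
      using x y unfolding disk_def by auto
    have eq: "fsm a x + fsm b y = fsm (a * c1 + b * c2) f"
      unfolding c by (simp add: fsm_def fun_eq_iff algebra_simps)
    have "norm (a * c1 + b * c2) \<le> norm a * norm c1 + norm b * norm c2"
      by (metis norm_mult norm_triangle_ineq)
    also have "\<dots> \<le> norm a * 1 + norm b * 1" using c by (intro add_mono mult_left_mono) auto
    finally have "norm (a * c1 + b * c2) \<le> 1" using ab by simp
    then show "fsm a x + fsm b y \<in> disk f" unfolding eq disk_def by auto
  qed
  have cp: "compactin (lc_topology (FV AP domT T \<omega> \<nu>) (FV_seminorms T \<omega> \<nu>)) (disk f)"
    unfolding disk_def
    by (rule image_compactin[OF _ cont_line[OF f]]) (simp add: compact_unit_ball_rnf)
  show ?thesis unfolding kappa_seminorms_def using sub ac cp by blast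
qed

lemma dual_scale: "\<phi> \<in> dual V P \<Longrightarrow> f \<in> V \<Longrightarrow> \<phi> (fsm c f) = c * \<phi> f"
  unfolding dual_def linear_on_def by blast

lemma limit_dual_pointwise:
  assumes f: "f \<in> FV AP domT T \<omega> \<nu>"
    and lim: "limitin (lc_topology (dual (FV AP domT T \<omega> \<nu>) (FV_seminorms T \<omega> \<nu>))
                   (kappa_seminorms (FV AP domT T \<omega> \<nu>) (FV_seminorms T \<omega> \<nu>))) Q L F"
  shows "((\<lambda>t. Q t f) \<longlongrightarrow> L f) F"
proof -
  let ?V = "FV AP domT T \<omega> \<nu>" and ?P = "FV_seminorms T \<omega> \<nu>"
  have "\<forall>y\<in>dual ?V ?P. \<forall>z\<in>dual ?V ?P. norm (y f - z f) \<le> (SUP g\<in>disk f. norm ((y - z) g))"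
  proof (intro ballI)
    fix y z assume y: "y \<in> dual ?V ?P" and z: "z \<in> dual ?V ?P"
    have bd: "bdd_above ((\<lambda>g. norm ((y - z) g)) ` disk f)"
    proof (rule bdd_aboveI2)
      fix g assume "g \<in> disk f"
      then obtain c where c: "g = fsm c f" "norm c \<le> 1" unfolding disk_def by auto
      have "(y - z) g = c * (y f - z f)"
        using dual_scale[OF y f] dual_scale[OF z f] c by (simp add: right_diff_distrib)
      then have "norm ((y - z) g) = norm c * norm (y f - z f)" by (simp add: norm_mult)
      also have "\<dots> \<le> 1 * norm (y f - z f)" using c by (intro mult_right_mono) auto
      finally show "norm ((y - z) g) \<le> norm (y f - z f)" by simp
    qed
    have "f \<in> disk f" unfolding disk_def by (rule image_eqI[of _ _ 1]) (auto simp: fsm_one)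
    from cSUP_upper[OF this bd] show "norm (y f - z f) \<le> (SUP g\<in>disk f. norm ((y - z) g))" by simp
  qed
  then have "((\<lambda>t. (\<lambda>\<phi>. \<phi> f) (Q t)) \<longlongrightarrow> (\<lambda>\<phi>. \<phi> f) L) F"
    by (rule limitin_lc_bound[OF lim disk_kappa[OF f]])
  then show ?thesis by simp
qed

end


lemma sm_neg:
  assumes "vector_space sm" shows "sm (-1) z = - z"
proof -
  have m: "module sm" using assms by (simp add: module_iff_vector_space)
  show ?thesis using module.scale_minus_left[OF m, of 1 z] module.scale_one[OF m, of z] by simp
qed

lemma lc_unique:
  fixes sm :: "'k::real_normed_field \<Rightarrow> 'e::ab_group_add \<Rightarrow> 'e"
  assumes vs: "vector_space sm" and L: "lchs sm UNIV PE"
    and l1: "limitin (lc_topology UNIV PE) Q l1 F" and l2: "limitin (lc_topology UNIV PE) Q l2 F"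
    and F: "F \<noteq> bot"
  shows "l1 = l2"
proof (rule ccontr)
  assume ne: "l1 \<noteq> l2"
  then have "l1 - l2 \<noteq> 0" by simp
  then obtain p where p: "p \<in> PE" "p (l1 - l2) \<noteq> 0" using L unfolding lchs_def by blast
  have sn: "seminorm_on sm UNIV p" using L p(1) unfolding lchs_def by blast
  have tri: "p (a + b) \<le> p a + p b" for a b using sn unfolding seminorm_on_def by blast
  have nn: "0 \<le> p a" for a using sn unfolding seminorm_on_def by blast
  have sym: "p (- a) = p a" for a
  proof -
    have "p (sm (-1) a) = norm (-1::'k) * p a" using sn unfolding seminorm_on_def by blast
    then show ?thesis using sm_neg[OF vs, of a] by simp
  qed
  define r where "r = p (l1 - l2)"
  have r: "0 < r" using p(2) nn[of "l1 - l2"] by (simp add: r_def)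
  have opn: "openin (lc_topology UNIV PE) {y. p (y - l) < r / 2}" for l
    unfolding openin_lc
  proof (intro conjI ballI)
    show "{y. p (y - l) < r / 2} \<subseteq> UNIV" by simp
    fix y0 assume y0: "y0 \<in> {y. p (y - l) < r / 2}"
    have "{y\<in>UNIV. \<forall>q\<in>{p}. q (y - y0) < r / 2 - p (y0 - l)} \<subseteq> {y. p (y - l) < r / 2}"
    proof
      fix y assume "y \<in> {y\<in>UNIV. \<forall>q\<in>{p}. q (y - y0) < r / 2 - p (y0 - l)}"
      then have "p (y - y0) < r / 2 - p (y0 - l)" by simp
      moreover have "p (y - l) \<le> p (y - y0) + p (y0 - l)" using tri[of "y - y0" "y0 - l"] by simp
      ultimately show "y \<in> {y. p (y - l) < r / 2}" by simp
    qed
    then show "\<exists>F \<epsilon>. finite F \<and> F \<subseteq> PE \<and> \<epsilon> > 0 \<and> {y\<in>UNIV. \<forall>p\<in>F. p (y - y0) < \<epsilon>} \<subseteq> {y. p (y - l) < r / 2}"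
      using p(1) y0 by (intro exI[of _ "{p}"] exI[of _ "r / 2 - p (y0 - l)"]) auto
  qed
  have p0: "p 0 = 0"
  proof -
    have m: "module sm" using vs by (simp add: module_iff_vector_space)
    have "p (sm 0 0) = norm (0::'k) * p 0" using sn unfolding seminorm_on_def by blast
    then show ?thesis using module.scale_zero_left[OF m, of 0] by simp
  qed
  have "eventually (\<lambda>t. Q t \<in> {y. p (y - l1) < r / 2}) F"
    using l1 opn[of l1] r p0 unfolding limitin_def by auto
  moreover have "eventually (\<lambda>t. Q t \<in> {y. p (y - l2) < r / 2}) F"
    using l2 opn[of l2] r p0 unfolding limitin_def by auto
  ultimately have "eventually (\<lambda>t. p (Q t - l1) < r / 2 \<and> p (Q t - l2) < r / 2) F"
    by (auto elim: eventually_elim2)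
  then obtain t where t: "p (Q t - l1) < r / 2" "p (Q t - l2) < r / 2"
    using eventually_happens'[OF F] by blast
  have "r \<le> p (l1 - Q t) + p (Q t - l2)" unfolding r_def using tri[of "l1 - Q t" "Q t - l2"] by simp
  also have "p (l1 - Q t) = p (Q t - l1)" using sym[of "Q t - l1"] by simp
  finally show False using t by simp
qed


lemma dual_add: "\<phi> \<in> dual V P \<Longrightarrow> \<psi> \<in> dual V P \<Longrightarrow> \<phi> + \<psi> \<in> dual V P"
proof -
  assume a: "\<phi> \<in> dual V P" "\<psi> \<in> dual V P"
  have c: "continuous_map (lc_topology V P) euclidean (\<lambda>f. \<phi> f + \<psi> f)"
    using a unfolding dual_def by (intro continuous_map_add) auto
  have "(\<phi> + \<psi>) = (\<lambda>f. \<phi> f + \<psi> f)" by (simp add: fun_eq_iff)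
  with a c show ?thesis unfolding dual_def linear_on_def by (auto simp: algebra_simps)
qed

lemma dual_fsm:
  fixes \<phi> :: "('a \<Rightarrow> 'k::real_normed_field) \<Rightarrow> 'k"
  shows "\<phi> \<in> dual V P \<Longrightarrow> fsm c \<phi> \<in> dual V P"
proof -
  assume a: "\<phi> \<in> dual V P"
  have cm: "continuous_map euclidean euclidean (\<lambda>z::'k. c * z)"
    by (simp add: continuous_intros)
  have "continuous_map (lc_topology V P) euclidean ((\<lambda>z. c * z) \<circ> \<phi>)"
    using a unfolding dual_def by (intro continuous_map_compose[OF _ cm]) auto
  then have c: "continuous_map (lc_topology V P) euclidean (fsm c \<phi>)"
    by (simp add: fsm_def o_def)
  with a show ?thesis unfolding dual_def linear_on_def fsm_def by (auto simp: algebra_simps)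
qed

lemma eventually_in_open:
  fixes x :: "real^'n"
  assumes "open \<Omega>" "x \<in> \<Omega>"
  shows "eventually (\<lambda>h::real. x + h *\<^sub>R axis n 1 \<in> \<Omega>) (at 0)"
proof -
  obtain r where r: "r > 0" "ball x r \<subseteq> \<Omega>" using assms open_contains_ball by blast
  have "\<forall>h::real. h \<noteq> 0 \<and> dist h 0 < r \<longrightarrow> x + h *\<^sub>R axis n 1 \<in> \<Omega>"
  proof (intro allI impI)
    fix h :: real assume "h \<noteq> 0 \<and> dist h 0 < r"
    then have "dist x (x + h *\<^sub>R axis n 1) < r" by (simp add: dist_norm)
    then show "x + h *\<^sub>R axis n 1 \<in> \<Omega>" using r by auto
  qed
  then show ?thesis unfolding eventually_at using r by blast
qed



theorem proposition4p10:
  fixes \<Omega> :: "(real^'n) set"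
    and AP :: "(real^'n \<Rightarrow> 'k::real_normed_field) set"
    and domT :: "'m \<Rightarrow> (real^'n \<Rightarrow> 'k) set"
    and T :: "'m \<Rightarrow> (real^'n \<Rightarrow> 'k) \<Rightarrow> 'w \<Rightarrow> 'k"
    and \<omega> :: "'m \<Rightarrow> 'w set"
    and \<nu> :: "'j \<Rightarrow> 'm \<Rightarrow> 'w \<Rightarrow> real"
    and smE :: "'k \<Rightarrow> 'e::ab_group_add \<Rightarrow> 'e"
    and PE :: "('e \<Rightarrow> real) set"
    and u :: "((real^'n \<Rightarrow> 'k) \<Rightarrow> 'k) \<Rightarrow> 'e"
  assumes "open \<Omega>"
    and "vector_space smE" and "lchs smE UNIV PE" and "\<exists>e::'e. e \<noteq> 0"
    and "fv_framework \<Omega> AP domT T \<omega> \<nu>"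
    and "dom_space \<Omega> AP domT T \<omega> \<nu>"
    and "\<forall>f\<in>FV AP domT T \<omega> \<nu>. C1_on \<Omega> (euclidean :: 'k topology) (*) f"
    and "C1_on \<Omega> (lc_topology (dual (FV AP domT T \<omega> \<nu>) (FV_seminorms T \<omega> \<nu>))
                   (kappa_seminorms (FV AP domT T \<omega> \<nu>) (FV_seminorms T \<omega> \<nu>)))
               fsm (delta (FV AP domT T \<omega> \<nu>))"
    and "u \<in> eps_product (FV AP domT T \<omega> \<nu>) (FV_seminorms T \<omega> \<nu>) smE PE"
  shows "C1_on \<Omega> (lc_topology UNIV PE) smE (\<lambda>x. u (delta (FV AP domT T \<omega> \<nu>) x)) \<and>
         (\<forall>x\<in>\<Omega>. \<forall>n. pderiv_in (lc_topology UNIV PE) smE (\<lambda>x. u (delta (FV AP domT T \<omega> \<nu>) x)) n x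
            = u (\<lambda>f. if f \<in> FV AP domT T \<omega> \<nu>
                     then pderiv_in (euclidean :: 'k topology) (*) f n x else 0))"
proof -
  define V where "V = FV AP domT T \<omega> \<nu>"
  define P where "P = FV_seminorms T \<omega> \<nu>"
  define D where "D = dual V P"
  define K where "K = kappa_seminorms V P"
  define \<tau> where "\<tau> = lc_topology D K"
  define E where "E = lc_topology UNIV PE"
  define \<delta> where "\<delta> = delta V"
  define g where "g = (\<lambda>x. u (\<delta> x))"
  note FW = assms(5)
  have C1f: "\<forall>f\<in>V. C1_on \<Omega> (euclidean :: 'k topology) (*) f" using assms(7) by (simp add: V_def)
  have C1d: "C1_on \<Omega> \<tau> fsm \<delta>" using assms(8) by (simp add: V_def P_def D_def K_def \<tau>_def \<delta>_def)
  have ulin: "linear_on fsm smE D u" and ucont: "continuous_map \<tau> E u"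
    using assms(9) by (simp_all add: eps_product_def V_def P_def D_def K_def \<tau>_def E_def)
  have din: "\<delta> x \<in> D" if "x \<in> \<Omega>" for x
    using assms(6) that unfolding dom_space_def Let_def by (simp add: V_def P_def D_def \<delta>_def)
  have at0: "(at (0::real)) \<noteq> bot" by simp
  have tau_unique: "L1 = L2" if l1: "limitin \<tau> Q L1 (at 0)" and l2: "limitin \<tau> Q L2 (at 0)"
    for Q :: "real \<Rightarrow> (real^'n \<Rightarrow> 'k) \<Rightarrow> 'k" and L1 L2
  proof
    fix f
    have LD: "L1 \<in> D" "L2 \<in> D" using l1 l2 unfolding limitin_def \<tau>_def by simp_all
    show "L1 f = L2 f"
    proof (cases "f \<in> V")
      case True
      have "(\<lambda>t. Q t f) \<midarrow>0\<rightarrow> L1 f"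
        using limit_dual_pointwise[OF FW True[unfolded V_def]] l1 by (simp add: \<tau>_def D_def K_def V_def P_def)
      moreover have "(\<lambda>t. Q t f) \<midarrow>0\<rightarrow> L2 f"
        using limit_dual_pointwise[OF FW True[unfolded V_def]] l2 by (simp add: \<tau>_def D_def K_def V_def P_def)
      ultimately show ?thesis by (rule tendsto_unique[OF at0])
    next
      case False
      then show ?thesis using LD unfolding D_def dual_def by simp
    qed
  qed
  have main: "has_pderiv_in E smE g n x (u (pderiv_in \<tau> fsm \<delta> n x)) \<and>
     pderiv_in \<tau> fsm \<delta> n x = (\<lambda>f. if f \<in> V then pderiv_in (euclidean :: 'k topology) (*) f n x else 0)"
    if x: "x \<in> \<Omega>" for x n
  proof -
    define Q where "Q = (\<lambda>h::real. fsm (of_real (inverse h)) (\<delta> (x + h *\<^sub>R axis n 1) - \<delta> x))"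
    obtain L0 where L0: "has_pderiv_in \<tau> fsm \<delta> n x L0" using C1d x unfolding C1_on_def by blast
    have Ld: "pderiv_in \<tau> fsm \<delta> n x = L0"
      unfolding pderiv_in_def
    proof (rule the_equality)
      show "has_pderiv_in \<tau> fsm \<delta> n x L0" by (rule L0)
    next
      fix L assume "has_pderiv_in \<tau> fsm \<delta> n x L"
      then show "L = L0" using L0 unfolding has_pderiv_in_def by (rule tau_unique)
    qed
    have limQ: "limitin \<tau> Q L0 (at 0)" using L0 by (simp add: has_pderiv_in_def Q_def)
    have L0D: "L0 \<in> D" using limQ unfolding limitin_def \<tau>_def by simp
    have Phi: "L0 = (\<lambda>f. if f \<in> V then pderiv_in (euclidean :: 'k topology) (*) f n x else 0)"
    proof
      fix f
      show "L0 f = (if f \<in> V then pderiv_in (euclidean :: 'k topology) (*) f n x else 0)"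
      proof (cases "f \<in> V")
        case True
        obtain Lf where Lf: "has_pderiv_in (euclidean :: 'k topology) (*) f n x Lf"
          using C1f True x unfolding C1_on_def by blast
        have Lf': "((\<lambda>h::real. of_real (inverse h) * (f (x + h *\<^sub>R axis n 1) - f x)) \<longlongrightarrow> Lf) (at 0)"
          using Lf by (simp add: has_pderiv_in_def)
        have pf: "pderiv_in (euclidean :: 'k topology) (*) f n x = Lf"
          unfolding pderiv_in_def
        proof (rule the_equality)
          show "has_pderiv_in (euclidean :: 'k topology) (*) f n x Lf" by (rule Lf)
        next
          fix L assume "has_pderiv_in (euclidean :: 'k topology) (*) f n x L"
          then have "((\<lambda>h::real. of_real (inverse h) * (f (x + h *\<^sub>R axis n 1) - f x)) \<longlongrightarrow> L) (at 0)"
            by (simp add: has_pderiv_in_def)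
          then show "L = Lf" using Lf' by (rule tendsto_unique[OF at0])
        qed
        have "(\<lambda>t. Q t f) \<midarrow>0\<rightarrow> L0 f"
          using limit_dual_pointwise[OF FW True[unfolded V_def]] limQ by (simp add: \<tau>_def D_def K_def V_def P_def)
        moreover have "(\<lambda>t. Q t f) = (\<lambda>h::real. of_real (inverse h) * (f (x + h *\<^sub>R axis n 1) - f x))"
          using True by (simp add: Q_def fsm_def \<delta>_def delta_def fun_eq_iff)
        ultimately have "(\<lambda>h::real. of_real (inverse h) * (f (x + h *\<^sub>R axis n 1) - f x)) \<midarrow>0\<rightarrow> L0 f" by simp
        then have "L0 f = Lf" using Lf' by (rule tendsto_unique[OF at0])
        then show ?thesis using True pf by simp
      next
        case False
        then show ?thesis using L0D unfolding D_def dual_def by simp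
      qed
    qed
    have ev: "eventually (\<lambda>h. (u \<circ> Q) h = smE (of_real (inverse h)) (g (x + h *\<^sub>R axis n 1) - g x)) (at 0)"
      using eventually_in_open[OF assms(1) x, of n]
    proof (rule eventually_mono)
      fix h :: real assume xh: "x + h *\<^sub>R axis n 1 \<in> \<Omega>"
      define A where "A = \<delta> (x + h *\<^sub>R axis n 1)"
      define B where "B = \<delta> x"
      have AD: "A \<in> D" and BD: "B \<in> D" using din xh x by (simp_all add: A_def B_def)
      have mB: "fsm (-1) B \<in> D" using dual_fsm BD by (simp add: D_def)
      have AB: "A - B = A + fsm (-1) B" by (simp add: fsm_def fun_eq_iff)
      have ABD: "A - B \<in> D" unfolding AB using dual_add AD mB by (simp add: D_def)
      have "u (A - B) = u A + u (fsm (-1) B)" unfolding AB using ulin AD mB unfolding linear_on_def by blast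
      also have "u (fsm (-1) B) = smE (-1) (u B)" using ulin BD unfolding linear_on_def by blast
      also have "\<dots> = - u B" by (rule sm_neg[OF assms(2)])
      finally have uAB: "u (A - B) = u A - u B" by (simp only: diff_conv_add_uminus)
      have "(u \<circ> Q) h = u (fsm (of_real (inverse h)) (A - B))" by (simp add: Q_def A_def B_def)
      also have "\<dots> = smE (of_real (inverse h)) (u (A - B))" using ulin ABD unfolding linear_on_def by blast
      finally show "(u \<circ> Q) h = smE (of_real (inverse h)) (g (x + h *\<^sub>R axis n 1) - g x)"
        using uAB by (simp add: g_def A_def B_def)
    qed
    have "limitin E (u \<circ> Q) (u L0) (at 0)" by (rule continuous_map_limit[OF ucont limQ])
    then have "limitin E (\<lambda>h. smE (of_real (inverse h)) (g (x + h *\<^sub>R axis n 1) - g x)) (u L0) (at 0)"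
      by (rule limitin_transform_eventually[OF ev])
    then have "has_pderiv_in E smE g n x (u L0)" by (simp add: has_pderiv_in_def)
    then show ?thesis using Ld Phi by simp
  qed
  have pg: "pderiv_in E smE g n x = u (pderiv_in \<tau> fsm \<delta> n x)" if x: "x \<in> \<Omega>" for x n
  proof -
    have h: "has_pderiv_in E smE g n x (u (pderiv_in \<tau> fsm \<delta> n x))" using main[OF x] by blast
    show ?thesis unfolding pderiv_in_def[of E smE g n x]
    proof (rule the_equality)
      show "has_pderiv_in E smE g n x (u (pderiv_in \<tau> fsm \<delta> n x))" by (rule h)
    next
      fix L assume "has_pderiv_in E smE g n x L"
      then show "L = u (pderiv_in \<tau> fsm \<delta> n x)" using h unfolding has_pderiv_in_def E_def
        by (rule lc_unique[OF assms(2) assms(3) _ _ at0])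
    qed
  qed
  have "C1_on \<Omega> E smE g"
    unfolding C1_on_def
  proof (intro conjI allI)
    show "g ` \<Omega> \<subseteq> topspace E" by (simp add: E_def)
    fix n
    show "\<forall>x\<in>\<Omega>. \<exists>L. has_pderiv_in E smE g n x L" using main by blast
    have "continuous_map (top_of_set \<Omega>) \<tau> (\<lambda>x. pderiv_in \<tau> fsm \<delta> n x)"
      using C1d unfolding C1_on_def by blast
    then have "continuous_map (top_of_set \<Omega>) E (u \<circ> (\<lambda>x. pderiv_in \<tau> fsm \<delta> n x))"
      by (rule continuous_map_compose[OF _ ucont])
    then show "continuous_map (top_of_set \<Omega>) E (\<lambda>x. pderiv_in E smE g n x)"
      by (rule continuous_map_eq) (simp add: pg)
  qed
  moreover have "\<forall>x\<in>\<Omega>. \<forall>n. pderiv_in E smE g n x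
      = u (\<lambda>f. if f \<in> V then pderiv_in (euclidean :: 'k topology) (*) f n x else 0)"
    using pg main by simp
  ultimately show ?thesis by (simp add: E_def g_def \<delta>_def V_def)
qed


end
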